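(* Let $H\ge 1$ be an integer and let $n_0,n_1,\dots,n_H$ be positive integers with $n_0=d$ and $n_H=1$ (the layer widths of a fully-connected feed-forward network with $d$ inputs, depth $H$ and a single output). Define the mass $\Psi=\prod_{i=0}^{H} n_i$, the quantity $\Lambda=\sqrt[H]{\Psi}$, and the size $N=\sum_{i=0}^{H-1} n_i n_{i+1}$. Then \[ \Psi^2 H=\Lambda^{2H}H\;\ge\; N\;\ge\; \sqrt[H]{\Psi^2}\,\frac{H}{\sqrt[H]{d}}\;\ge\;\sqrt[H]{\Psi}=\Lambda . \]
   Context: The network has layers $0,1,\dots,H$, where layer $i$ has $n_i$ units, layer $0$ is the input layer and layer $H$ is the output layer; consecutive layers are fully connected, so $N$ is the total number of weights and $\Psi$ is the total number of input-to-output paths. *)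

theory Defs
  imports Complex_Main
begin

definition mass :: "nat \<Rightarrow> (nat \<Rightarrow> nat) \<Rightarrow> real" where
  "mass H n = real (\<Prod>i\<le>H. n i)"

definition Lambda :: "nat \<Rightarrow> (nat \<Rightarrow> nat) \<Rightarrow> real" where
  "Lambda H n = root H (mass H n)"

definition size_net :: "nat \<Rightarrow> (nat \<Rightarrow> nat) \<Rightarrow> real" where
  "size_net H n = real (\<Sum>i<H. n i * n (Suc i))"

end

theory Submission
  imports Defs "HOL-Analysis.Analysis"
begin

theorem theorem3p1:
  fixes H d :: nat and n :: "nat \<Rightarrow> nat"
  assumes "H \<ge> 1"
    and "\<And>i. i \<le> H \<Longrightarrow> n i > 0"
    and "n 0 = d"
    and "n H = 1"
  shows "(mass H n)\<^sup>2 * real H = (Lambda H n) ^ (2 * H) * real H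
    \<and> (Lambda H n) ^ (2 * H) * real H \<ge> size_net H n
    \<and> size_net H n \<ge> root H ((mass H n)\<^sup>2) * real H / root H (real d)
    \<and> root H ((mass H n)\<^sup>2) * real H / root H (real d) \<ge> root H (mass H n)
    \<and> root H (mass H n) = Lambda H n"
proof -
  have H0: "0 < H" using assms(1) by simp
  define A where "A = (\<Prod>i<H. n i)"
  define B where "B = (\<Prod>i<H. n (Suc i))"
  define P where "P = (\<Prod>i\<le>H. n i)"
  define Q where "Q = (\<Prod>i<H. n i * n (Suc i))"
  have QAB: "Q = A * B" unfolding Q_def A_def B_def by (simp add: prod.distrib)
  have PA: "P = A"
  proof -
    have "(\<Prod>i\<le>H. n i) = (\<Prod>i<Suc H. n i)" by (simp only: lessThan_Suc_atMost)
    also have "\<dots> = (\<Prod>i<H. n i) * n H" by (rule prod.lessThan_Suc)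
    finally show ?thesis unfolding P_def A_def using assms(4) by simp
  qed
  have PB: "P = d * B"
  proof -
    obtain m where m: "H = Suc m" using H0 by (cases H) auto
    have "(\<Prod>i\<le>Suc m. n i) = n 0 * (\<Prod>i\<le>m. n (Suc i))"
      by (rule prod.atMost_Suc_shift)
    also have "(\<Prod>i\<le>m. n (Suc i)) = (\<Prod>i<Suc m. n (Suc i))"
      by (simp only: lessThan_Suc_atMost)
    finally have "(\<Prod>i\<le>H. n i) = n 0 * (\<Prod>i<H. n (Suc i))" using m by simp
    then show ?thesis unfolding P_def B_def using assms(3) by simp
  qed
  have Bpos: "B \<ge> 1" unfolding B_def using assms(2)
    by (simp add: Suc_le_eq prod_pos)
  have dpos: "d \<ge> 1" using assms(2)[of 0] assms(3) by simp
  have Ppos: "P \<ge> 1" using PB Bpos dpos by (simp add: Suc_le_eq)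
  have Qd: "Q * d = P * P" using QAB PA PB by (simp add: mult_ac)
  have QP: "P \<le> Q" using PA QAB Bpos by simp
  have QP2: "Q \<le> P * P"
  proof -
    have "Q * 1 \<le> Q * d" using dpos by (rule mult_le_mono2)
    then show ?thesis using Qd by simp
  qed
  have mass: "mass H n = real P" unfolding mass_def P_def by simp
  have sz: "size_net H n = real (\<Sum>i<H. n i * n (Suc i))" unfolding size_net_def by simp
  have e1: "(Lambda H n) ^ (2 * H) = (mass H n)\<^sup>2"
    unfolding Lambda_def mass using H0
  proof -
    have "(root H (real P)) ^ H = real P" using H0 by (simp add: real_root_pow_pos2)
    then have "(root H (real P)) ^ (H * 2) = (real P)^2" by (simp add: power_mult)
    then show "root H (real P) ^ (2 * H) = (real P)\<^sup>2" by (simp add: mult.commute)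
  qed
  have termle: "n i * n (Suc i) \<le> Q" if "i < H" for i
  proof -
    have "n i * n (Suc i) dvd Q" unfolding Q_def using that by (intro dvd_prodI) auto
    moreover have "Q > 0" using QP Ppos by simp
    ultimately show ?thesis by (simp add: dvd_imp_le)
  qed
  have sumle: "(\<Sum>i<H. n i * n (Suc i)) \<le> H * Q"
    using sum_mono[of "{..<H}" "\<lambda>i. n i * n (Suc i)" "\<lambda>_. Q"] termle by simp
  have e2: "size_net H n \<le> (mass H n)\<^sup>2 * real H"
  proof -
    have "H * Q \<le> H * (P * P)" using QP2 by simp
    then have "(\<Sum>i<H. n i * n (Suc i)) \<le> H * (P * P)" using sumle by (rule order_trans[rotated])
    then have "(\<Sum>i<H. n i * n (Suc i)) \<le> P * P * H" by (simp only: mult.commute)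
    then have "real (\<Sum>i<H. n i * n (Suc i)) \<le> real (P * P * H)" by linarith
    then show ?thesis unfolding sz mass by (simp add: power2_eq_square)
  qed
  have amgm: "(\<Sum>i<H. real (n i * n (Suc i)) / card {..<H}) \<ge> (\<Prod>i<H. real (n i * n (Suc i))) powr (1 / card {..<H})"
    by (rule arith_geom_mean) (use H0 in auto)
  have rq: "root H (real Q) = real Q powr (1 / H)"
    using H0 QP Ppos by (simp add: root_powr_inverse)
  have rQ: "root H ((mass H n)\<^sup>2) / root H (real d) = root H (real Q)"
  proof -
    have "real Q = (real P)^2 / real d" using Qd dpos
      by (simp add: field_simps power2_eq_square) (metis of_nat_mult)
    then show ?thesis unfolding mass by (simp add: real_root_divide)
  qed
  have e3: "size_net H n \<ge> root H (real Q) * real H"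
  proof -
    have "(\<Sum>i<H. real (n i * n (Suc i)) / card {..<H}) = size_net H n / H"
      unfolding sz by (simp add: sum_divide_distrib)
    moreover have "(\<Prod>i<H. real (n i * n (Suc i))) = real Q" unfolding Q_def by simp
    ultimately have "size_net H n / H \<ge> root H (real Q)" using amgm rq by simp
    then show ?thesis using H0 by (simp add: field_simps)
  qed
  have e4: "root H (real Q) * real H \<ge> root H (real P)"
  proof -
    have "root H (real Q) \<ge> root H (real P)" using QP H0 by simp
    moreover have "root H (real Q) \<ge> 0" using H0 by simp
    ultimately show ?thesis using assms(1)
      by (metis mult_left_mono mult.right_neutral of_nat_1 of_nat_le_iff order_trans)
  qed
  have rQ': "root H ((mass H n)\<^sup>2) * real H / root H (real d) = root H (real Q) * real H"
    using rQ by (metis times_divide_eq_left mult.commute)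
  show ?thesis
    using e1 e2 e3 e4 rQ' unfolding Lambda_def mass by simp
qed

end
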